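(* Let $S\subset\mathbb{N}$ be a WM set with density $d(S)<1$. Then $S$ is not an IP*-set, i.e. there exists an IP-set $E$ with $E\cap S=\emptyset$.
   Context: $\mathbb{N}=\{1,2,\dots\}$. An IP-set is a set $\{p_{i_1}+\dots+p_{i_k}: k\in\mathbb{N},\ i_1<\dots<i_k\}$ for an infinite sequence $(p_i)$ of natural numbers. $S$ is an IP*-set if $S$ meets every IP-set. $\Omega=\{0,1\}^{\mathbb{N}}$ with product topology and left shift $T$; $X_{1_S}$ is the closure of $\{T^n1_S:n\ge0\}$. A point $\xi$ is generic for $(X,\mu,T)$ if $\frac1N\sum_{n=0}^{N-1}f(T^n\xi)\to\int f\,d\mu$ for all continuous $f$. $d(S)=\lim_N\frac1N|S\cap\{1,\dots,N\}|$. $S$ is a WM set if for some $T$-invariant Borel probability $\mu$ on $X_{1_S}$, $1_S$ is generic for $(X_{1_S},\mu,T)$, this system is weakly mixing, and $d(S)>0$. *)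

theory Defs
  imports "HOL-Analysis.Analysis" "HOL-Probability.Probability"
begin

text \<open>Points of Omega = {0,1}^N (N = {1,2,...}) are functions nat => bool, where
  the coordinate with index i represents the coordinate i+1 of the paper.\<close>

definition shift :: "(nat \<Rightarrow> bool) \<Rightarrow> (nat \<Rightarrow> bool)" where
  "shift x = (\<lambda>i. x (Suc i))"

definition indic_pt :: "nat set \<Rightarrow> (nat \<Rightarrow> bool)" where
  "indic_pt S = (\<lambda>i. Suc i \<in> S)"

definition orbit_closure :: "(nat \<Rightarrow> bool) \<Rightarrow> (nat \<Rightarrow> bool) set" where
  "orbit_closure \<xi> = closure (range (\<lambda>n. (shift ^^ n) \<xi>))"

definition invariant_borel_prob ::
  "(nat \<Rightarrow> bool) set \<Rightarrow> (nat \<Rightarrow> bool) measure \<Rightarrow> bool" where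
  "invariant_borel_prob X M \<longleftrightarrow>
     prob_space M \<and> space M = X \<and> sets M = sets (restrict_space borel X) \<and>
     shift \<in> measurable M M \<and> distr M M shift = M"

definition generic_point ::
  "(nat \<Rightarrow> bool) set \<Rightarrow> (nat \<Rightarrow> bool) measure \<Rightarrow> (nat \<Rightarrow> bool) \<Rightarrow> bool" where
  "generic_point X M \<xi> \<longleftrightarrow>
     (\<forall>f :: (nat \<Rightarrow> bool) \<Rightarrow> real. continuous_on X f \<longrightarrow>
        (\<lambda>N. (\<Sum>n<N. f ((shift ^^ n) \<xi>)) / real N) \<longlonglongrightarrow> integral\<^sup>L M f)"

definition weakly_mixing :: "(nat \<Rightarrow> bool) measure \<Rightarrow> bool" where
  "weakly_mixing M \<longleftrightarrow>
     (\<forall>A\<in>sets M. \<forall>B\<in>sets M.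
        (\<lambda>N. (\<Sum>n<N. \<bar>measure M (A \<inter> ((shift ^^ n) -` B \<inter> space M))
                        - measure M A * measure M B\<bar>) / real N) \<longlonglongrightarrow> 0)"

definition has_density :: "nat set \<Rightarrow> real \<Rightarrow> bool" where
  "has_density S d \<longleftrightarrow> (\<lambda>N. real (card (S \<inter> {1..N})) / real N) \<longlonglongrightarrow> d"

definition WM_set :: "nat set \<Rightarrow> bool" where
  "WM_set S \<longleftrightarrow> S \<subseteq> {1..} \<and>
     (\<exists>M. invariant_borel_prob (orbit_closure (indic_pt S)) M \<and>
          generic_point (orbit_closure (indic_pt S)) M (indic_pt S) \<and>
          weakly_mixing M) \<and>
     (\<exists>d. has_density S d \<and> d > 0)"

definition IP_set :: "nat set \<Rightarrow> bool" where
  "IP_set E \<longleftrightarrow> (\<exists>p :: nat \<Rightarrow> nat. (\<forall>i. p i \<ge> 1) \<and>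
     E = {(\<Sum>i\<in>F. p i) | F. finite F \<and> F \<noteq> {}})"

definition IP_star_set :: "nat set \<Rightarrow> bool" where
  "IP_star_set S \<longleftrightarrow> (\<forall>E. IP_set E \<longrightarrow> E \<inter> S \<noteq> {})"

end

theory Submission
  imports Defs
begin

definition cyl :: "(nat \<Rightarrow> bool) set \<Rightarrow> nat set \<Rightarrow> (nat \<Rightarrow> bool) set" where
  "cyl X D = {x \<in> X. \<forall>j\<in>D. \<not> x j}"

lemma open_coord: "open {x::nat\<Rightarrow>bool. \<not> x j}"
proof -
  have "{x::nat\<Rightarrow>bool. \<not> x j} = (\<lambda>x. x j) -` {False}" by auto
  moreover have "open ((\<lambda>x::nat\<Rightarrow>bool. x j) -` {False})"
    using continuous_on_open_vimage[of UNIV "\<lambda>x::nat\<Rightarrow>bool. x j"] discrete_topology_class.open_discrete[of "{False::bool}"] by simp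
  ultimately show ?thesis by simp
qed

lemma open_cylU: "finite D \<Longrightarrow> open {x::nat\<Rightarrow>bool. \<forall>j\<in>D. \<not> x j}"
proof -
  assume "finite D"
  have "{x::nat\<Rightarrow>bool. \<forall>j\<in>D. \<not> x j} = (\<Inter>j\<in>D. {x. \<not> x j}) \<inter> UNIV" by auto
  then show ?thesis using open_INT[OF \<open>finite D\<close>, of "\<lambda>j. {x::nat\<Rightarrow>bool. \<not> x j}"] open_coord
    by auto
qed

lemma cyl_sets:
  assumes "sets M = sets (restrict_space borel X)" "finite D"
  shows "cyl X D \<in> sets M"
proof -
  have "cyl X D = X \<inter> {x. \<forall>j\<in>D. \<not> x j}" by (auto simp: cyl_def)
  moreover have "{x::nat\<Rightarrow>bool. \<forall>j\<in>D. \<not> x j} \<in> sets borel" using open_cylU[OF assms(2)] by auto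
  ultimately show ?thesis using assms(1) by (simp add: sets_restrict_space)
qed

definition cf :: "nat set \<Rightarrow> (nat \<Rightarrow> bool) \<Rightarrow> real" where
  "cf D x = (\<Prod>j\<in>D. (if x j then 0 else 1))"

lemma cf_cont: "continuous_on X (cf D)"
proof -
  have "continuous_on UNIV (\<lambda>x::nat\<Rightarrow>bool. (if x j then 0 else 1::real))" for j
    using continuous_on_compose[OF continuous_on_product_coordinates[of j] Topological_Spaces.continuous_on_discrete[of _ "\<lambda>b::bool. if b then 0 else 1::real"]]
    by (simp add: o_def)
  then have "continuous_on UNIV (cf D)" unfolding cf_def by (intro continuous_on_prod) auto
  then show ?thesis by (rule continuous_on_subset) auto
qed

lemma cf_ind: "finite D \<Longrightarrow> x \<in> X \<Longrightarrow> cf D x = indicator (cyl X D) x"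
  unfolding cf_def cyl_def by (induction D rule: finite_induct) (auto simp: indicator_def)

lemma avg_contra:
  fixes a b :: "nat \<Rightarrow> real"
  assumes avga: "(\<lambda>N. (\<Sum>n<N. a n) / real N) \<longlonglongrightarrow> 0"
    and avgb: "(\<lambda>N. (\<Sum>n<N. b n) / real N) \<longlonglongrightarrow> mu"
    and "mu > 0" "c > 0" and ab: "\<And>m. c * b m \<le> a (Suc m)" and apos: "\<And>n. a n \<ge> 0"
  shows False
proof -
  have L: "(\<lambda>N. c * ((\<Sum>n<N. b n) / real N)) \<longlonglongrightarrow> c * mu"
    using avgb by (intro tendsto_intros)
  have a1: "(\<lambda>N. (\<Sum>n<Suc N. a n) / real (Suc N)) \<longlonglongrightarrow> 0"
    using LIMSEQ_Suc[OF avga] by simp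
  have R: "(\<lambda>N. (\<Sum>n<Suc N. a n) / real (Suc N) * (real (Suc N) / real N)) \<longlonglongrightarrow> 0 * 1"
    using a1 LIMSEQ_Suc_n_over_n by (intro tendsto_intros) auto
  have "c * mu \<le> 0 * 1"
  proof (rule LIMSEQ_le[OF L R], intro exI allI impI)
    fix N :: nat assume "N \<ge> 1"
    have "c * (\<Sum>n<N. b n) = (\<Sum>n<N. c * b n)" by (simp add: sum_distrib_left)
    also have "\<dots> \<le> (\<Sum>n<N. a (Suc n))" by (rule sum_mono) (rule ab)
    also have "\<dots> \<le> a 0 + (\<Sum>n<N. a (Suc n))" using apos[of 0] by simp
    also have "\<dots> = (\<Sum>n<Suc N. a n)" by (rule sum.lessThan_Suc_shift[symmetric])
    finally have *: "c * (\<Sum>n<N. b n) \<le> (\<Sum>n<Suc N. a n)" .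
    have "(\<Sum>n<Suc N. a n) / real (Suc N) * (real (Suc N) / real N) = (\<Sum>n<Suc N. a n) / real N"
      by (simp del: of_nat_Suc)
    moreover have "c * ((\<Sum>n<N. b n) / real N) = c * (\<Sum>n<N. b n) / real N" by simp
    ultimately show "c * ((\<Sum>n<N. b n) / real N) \<le> (\<Sum>n<Suc N. a n) / real (Suc N) * (real (Suc N) / real N)"
      using * \<open>N \<ge> 1\<close> by (simp add: divide_right_mono)
  qed
  then show False using \<open>mu > 0\<close> \<open>c > 0\<close> by (smt (verit) mult_pos_pos)
qed

lemma inv_parts:
  assumes "invariant_borel_prob X M"
  shows "prob_space M" "space M = X" "sets M = sets (restrict_space borel X)" "shift \<in> measurable M M"
proof -
  have h: "prob_space M \<and> space M = X \<and> sets M = sets (restrict_space borel X) \<and> shift \<in> measurable M M \<and> distr M M shift = M"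
    using assms unfolding invariant_borel_prob_def .
  show "prob_space M" using conjunct1[OF h] .
  show "space M = X" using conjunct1[OF conjunct2[OF h]] .
  show "sets M = sets (restrict_space borel X)" using conjunct1[OF conjunct2[OF conjunct2[OF h]]] .
  show "shift \<in> measurable M M" using conjunct1[OF conjunct2[OF conjunct2[OF conjunct2[OF h]]]] .
qed

lemma funpow_shift: "(shift ^^ n) x j = x (j + n)"
  by (induction n arbitrary: j) (auto simp: shift_def)

lemma shift_X:
  assumes "invariant_borel_prob X M" "x \<in> X"
  shows "(shift ^^ n) x \<in> X"
proof -
  have "shift \<in> measurable M M" "space M = X" using inv_parts[OF assms(1)] by simp_all
  then have "\<And>y. y \<in> X \<Longrightarrow> shift y \<in> X" using measurable_space by metis
  then show ?thesis using assms(2) by (induction n) auto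
qed

lemma pre_cyl:
  assumes "invariant_borel_prob X M"
  shows "(shift ^^ n) -` cyl X D \<inter> X = cyl X ((\<lambda>j. j + n) ` D)"
proof (rule set_eqI)
  fix x
  show "x \<in> (shift ^^ n) -` cyl X D \<inter> X \<longleftrightarrow> x \<in> cyl X ((\<lambda>j. j + n) ` D)"
    unfolding cyl_def using shift_X[OF assms, of x n] by (auto simp add: funpow_shift)
qed

lemma cyl_avg:
  assumes inv: "invariant_borel_prob X M" and gen: "generic_point X M \<xi>"
    and orb: "\<And>n. (shift ^^ n) \<xi> \<in> X" and fin: "finite D"
  shows "(\<lambda>N. (\<Sum>n<N. indicator (cyl X D) ((shift ^^ n) \<xi>)) / real N) \<longlonglongrightarrow> measure M (cyl X D)"
proof -
  have sp: "space M = X" and ps: "prob_space M" and se: "sets M = sets (restrict_space borel X)"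
    using inv_parts[OF inv] by simp_all
  have lim: "(\<lambda>N. (\<Sum>n<N. cf D ((shift ^^ n) \<xi>)) / real N) \<longlonglongrightarrow> integral\<^sup>L M (cf D)"
    using gen unfolding generic_point_def by (rule allE[of _ "cf D"]) (use cf_cont in blast)
  have e1: "(\<lambda>N. (\<Sum>n<N. cf D ((shift ^^ n) \<xi>)) / real N) = (\<lambda>N. (\<Sum>n<N. indicator (cyl X D) ((shift ^^ n) \<xi>)) / real N)"
    using cf_ind[OF fin orb] by simp
  have "integral\<^sup>L M (cf D) = integral\<^sup>L M (indicator (cyl X D))"
    using cf_ind[OF fin] sp by (intro Bochner_Integration.integral_cong) auto
  also have "\<dots> = measure M (cyl X D \<inter> space M)" by simp
  also have "cyl X D \<inter> space M = cyl X D"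
    using sp by (auto simp: cyl_def)
  finally have e2: "integral\<^sup>L M (cf D) = measure M (cyl X D)" .
  show ?thesis using lim unfolding e1 e2 .
qed

lemma step_exists:
  assumes inv: "invariant_borel_prob X M" and gen: "generic_point X M \<xi>" and wm: "weakly_mixing M"
    and orb: "\<And>n. (shift ^^ n) \<xi> \<in> X" and fin: "finite D" and pos: "measure M (cyl X D) > 0"
  shows "\<exists>n\<ge>1. (shift ^^ (n - 1)) \<xi> \<in> cyl X D \<and> measure M (cyl X (D \<union> (\<lambda>j. j + n) ` D)) > 0"
proof (rule ccontr)
  assume "\<not> ?thesis"
  then have nex: "\<And>n. n \<ge> 1 \<Longrightarrow> (shift ^^ (n - 1)) \<xi> \<in> cyl X D \<Longrightarrow> \<not> measure M (cyl X (D \<union> (\<lambda>j. j + n) ` D)) > 0"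
    by blast
  have sp: "space M = X" and se: "sets M = sets (restrict_space borel X)"
    using inv_parts[OF inv] by simp_all
  define B where "B = cyl X D"
  have Bs: "B \<in> sets M" unfolding B_def by (rule cyl_sets[OF se fin])
  have eq: "B \<inter> ((shift ^^ n) -` B \<inter> space M) = cyl X (D \<union> (\<lambda>j. j + n) ` D)" for n
    using pre_cyl[OF inv, of n D] sp unfolding B_def by (auto simp: cyl_def)
  define a where "a n = \<bar>measure M (B \<inter> ((shift ^^ n) -` B \<inter> space M)) - measure M B * measure M B\<bar>" for n
  define b where "b m = (indicator B ((shift ^^ m) \<xi>) :: real)" for m
  have avga: "(\<lambda>N. (\<Sum>n<N. a n) / real N) \<longlonglongrightarrow> 0"
    using wm unfolding weakly_mixing_def a_def by (rule bspec[OF bspec[OF _ Bs] Bs])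
  have avgb: "(\<lambda>N. (\<Sum>n<N. b n) / real N) \<longlonglongrightarrow> measure M B"
    unfolding b_def B_def by (rule cyl_avg[OF inv gen orb fin])
  have ab: "measure M B * measure M B * b m \<le> a (Suc m)" for m
  proof (cases "(shift ^^ m) \<xi> \<in> B")
    case True
    then have "\<not> measure M (cyl X (D \<union> (\<lambda>j. j + Suc m) ` D)) > 0"
      using nex[of "Suc m"] True unfolding B_def by simp
    then have "measure M (B \<inter> ((shift ^^ Suc m) -` B \<inter> space M)) = 0"
      using eq[of "Suc m"] measure_nonneg[of M] by (metis order.antisym not_less)
    then show ?thesis using True unfolding a_def b_def by simp
  next
    case False
    then show ?thesis unfolding a_def b_def by simp
  qed
  show False
  proof (rule avg_contra[OF avga avgb])
    show "measure M B > 0" using pos by (simp add: B_def)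
    then show "measure M B * measure M B > 0" by simp
    show "a n \<ge> 0" for n unfolding a_def by simp
    show "measure M B * measure M B * b m \<le> a (Suc m)" for m by (rule ab)
  qed
qed

fun Dseq :: "(nat set \<Rightarrow> nat) \<Rightarrow> nat \<Rightarrow> nat set" where
  "Dseq g 0 = {0}"
| "Dseq g (Suc k) = Dseq g k \<union> (\<lambda>j. j + g (Dseq g k)) ` Dseq g k"

lemma Dseq_finite: "finite (Dseq g k)"
  by (induction k) auto

lemma Dseq_sums: "F \<subseteq> {..<k} \<Longrightarrow> (\<Sum>i\<in>F. g (Dseq g i)) \<in> Dseq g k"
proof (induction k arbitrary: F)
  case 0
  then show ?case by simp
next
  case (Suc k)
  show ?case
  proof (cases "k \<in> F")
    case True
    have fin: "finite (F - {k})" using Suc.prems finite_subset by blast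
    have "F - {k} \<subseteq> {..<k}" using Suc.prems by auto
    then have "(\<Sum>i\<in>F - {k}. g (Dseq g i)) \<in> Dseq g k" by (rule Suc.IH)
    moreover have "(\<Sum>i\<in>F. g (Dseq g i)) = (\<Sum>i\<in>F - {k}. g (Dseq g i)) + g (Dseq g k)"
      using True fin by (simp add: sum.remove add.commute)
    ultimately show ?thesis by auto
  next
    case False
    then have "F \<subseteq> {..<k}" using Suc.prems by (auto simp: less_Suc_eq)
    then show ?thesis using Suc.IH by auto
  qed
qed

lemma sum_ind_card:
  assumes "finite A"
  shows "(\<Sum>k\<in>A. indicator S k :: real) = real (card (A \<inter> S))"
proof -
  have "(\<Sum>k\<in>A. indicator S k :: real) = (\<Sum>k\<in>A. real (indicator S k :: nat))"
    by (intro sum.cong) (auto simp: indicator_def)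
  also have "\<dots> = real (\<Sum>k\<in>A. indicator S k :: nat)" by (rule of_nat_sum[symmetric])
  also have "(\<Sum>k\<in>A. indicator S k :: nat) = card (A \<inter> S)" by (rule sum_indicator_eq_card[OF assms])
  finally show ?thesis .
qed

lemma density_complement:
  assumes "has_density S d" and orb: "\<And>n. (shift ^^ n) (indic_pt S) \<in> X"
  shows "(\<lambda>N. (\<Sum>n<N. indicator (cyl X {0}) ((shift ^^ n) (indic_pt S))) / real N) \<longlonglongrightarrow> 1 - d"
proof -
  have lim: "(\<lambda>N. 1 - real (card (S \<inter> {1..N})) / real N) \<longlonglongrightarrow> 1 - d"
    using assms unfolding has_density_def by (intro tendsto_intros)
  have eq: "(\<Sum>n<N. indicator (cyl X {0}) ((shift ^^ n) (indic_pt S))) / real N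
      = 1 - real (card (S \<inter> {1..N})) / real N" if "N \<ge> 1" for N
  proof -
    have "(\<Sum>n<N. indicator (cyl X {0}) ((shift ^^ n) (indic_pt S)) :: real)
        = (\<Sum>n<N. 1 - indicator S (Suc n))"
      using orb by (intro sum.cong) (auto simp: cyl_def funpow_shift indic_pt_def indicator_def)
    also have "\<dots> = real N - (\<Sum>n<N. indicator S (Suc n))"
      by (simp add: sum_subtractf)
    also have "(\<Sum>n<N. indicator S (Suc n) :: real) = (\<Sum>k\<in>{1..N}. indicator S k)"
      using sum.atLeast1_atMost_eq[of "indicator S :: nat \<Rightarrow> real" N] by simp
    also have "\<dots> = real (card ({1..N} \<inter> S))"
      by (rule sum_ind_card) simp
    finally show ?thesis using that by (simp add: diff_divide_distrib Int_commute)
  qed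
  show ?thesis
  proof (rule Lim_transform_eventually[OF lim])
    show "\<forall>\<^sub>F N in sequentially. 1 - real (card (S \<inter> {1..N})) / real N =
      (\<Sum>n<N. indicator (cyl X {0}) ((shift ^^ n) (indic_pt S))) / real N"
      unfolding eventually_sequentially by (intro exI[of _ 1] allI impI) (simp add: eq)
  qed
qed

theorem mainTheorem8:
  fixes S :: "nat set" and d :: real
  assumes "WM_set S"
    and "has_density S d"
    and "d < 1"
  shows "\<not> IP_star_set S \<and> (\<exists>E. IP_set E \<and> E \<inter> S = {})"
proof -
  define \<xi> where "\<xi> = indic_pt S"
  define X where "X = orbit_closure \<xi>"
  obtain M where inv: "invariant_borel_prob X M" and gen: "generic_point X M \<xi>" and wm: "weakly_mixing M"
  proof -
    have "\<exists>M. invariant_borel_prob X M \<and> generic_point X M \<xi> \<and> weakly_mixing M"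
      using conjunct1[OF conjunct2[OF assms(1)[unfolded WM_set_def]]] unfolding X_def \<xi>_def .
    then obtain M where "invariant_borel_prob X M" "generic_point X M \<xi>" "weakly_mixing M" by blast
    then show ?thesis by (rule that)
  qed
  have orb: "(shift ^^ n) \<xi> \<in> X" for n
    unfolding X_def orbit_closure_def by (rule subsetD[OF closure_subset]) (rule rangeI)
  have base: "measure M (cyl X {0}) > 0"
  proof -
    have "(\<lambda>N. (\<Sum>n<N. indicator (cyl X {0}) ((shift ^^ n) \<xi>)) / real N) \<longlonglongrightarrow> measure M (cyl X {0})"
      by (rule cyl_avg[OF inv gen orb]) simp
    moreover have "(\<lambda>N. (\<Sum>n<N. indicator (cyl X {0}) ((shift ^^ n) \<xi>)) / real N) \<longlonglongrightarrow> 1 - d"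
    proof -
      have orb': "\<And>n. (shift ^^ n) (indic_pt S) \<in> X" using orb unfolding \<xi>_def .
      show ?thesis unfolding \<xi>_def by (rule density_complement[OF assms(2) orb'])
    qed
    ultimately have "measure M (cyl X {0}) = 1 - d" by (rule LIMSEQ_unique)
    then show ?thesis using assms(3) by simp
  qed
  define g where "g D = (SOME n. n \<ge> 1 \<and> (shift ^^ (n - 1)) \<xi> \<in> cyl X D \<and> measure M (cyl X (D \<union> (\<lambda>j. j + n) ` D)) > 0)" for D
  have gprop: "g D \<ge> 1 \<and> (shift ^^ (g D - 1)) \<xi> \<in> cyl X D \<and> measure M (cyl X (D \<union> (\<lambda>j. j + g D) ` D)) > 0"
    if "finite D" "measure M (cyl X D) > 0" for D
    unfolding g_def by (rule someI_ex) (use step_exists[OF inv gen wm orb that] in blast)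
  have pos: "measure M (cyl X (Dseq g k)) > 0" for k
  proof (induction k)
    case 0 then show ?case using base by simp
  next
    case (Suc k) then show ?case using gprop[OF Dseq_finite] by simp
  qed
  define p where "p i = g (Dseq g i)" for i
  have p1: "p i \<ge> 1" for i unfolding p_def using gprop[OF Dseq_finite pos] by blast
  have avoid: "j + p k \<notin> S" if "j \<in> Dseq g k" for j k
  proof -
    have "(shift ^^ (p k - 1)) \<xi> \<in> cyl X (Dseq g k)"
      unfolding p_def using gprop[OF Dseq_finite pos] by blast
    then have "\<not> \<xi> (j + (p k - 1))" using that by (auto simp: cyl_def funpow_shift)
    moreover have "Suc (j + (p k - 1)) = j + p k" using p1[of k] by simp
    ultimately show ?thesis unfolding \<xi>_def indic_pt_def by metis
  qed
  define E where "E = {(\<Sum>i\<in>F. p i) | F. finite F \<and> F \<noteq> {}}"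
  have IP: "IP_set E" unfolding IP_set_def E_def using p1 by blast
  have disj: "E \<inter> S = {}"
  proof -
    have "(\<Sum>i\<in>F. p i) \<notin> S" if "finite F" "F \<noteq> {}" for F
    proof -
      define k where "k = Max F"
      have kF: "k \<in> F" using that by (simp add: k_def)
      have sub: "F - {k} \<subseteq> {..<k}" using that k_def by (auto simp: less_le)
      have "(\<Sum>i\<in>F - {k}. p i) \<in> Dseq g k" unfolding p_def by (rule Dseq_sums[OF sub])
      moreover have "(\<Sum>i\<in>F. p i) = (\<Sum>i\<in>F - {k}. p i) + p k"
        using kF that by (simp add: sum.remove add.commute)
      ultimately show ?thesis using avoid by metis
    qed
    then show ?thesis unfolding E_def by blast
  qed
  show ?thesis using IP disj unfolding IP_star_set_def by blast
qed

end
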